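(* Under conditions C1, C2a and C2b, for every $\lambda>0$ and $\theta\in\Theta$: $S(Y^*;\theta,\lambda)=0$ if and only if $\theta=\theta^*$.
   Context: Setting: $T>0$, $C\in\mathbb{R}^{d'\times d}$, $\Theta\subset\mathbb{R}^p$; for $\theta\in\Theta$, $A_\theta(t)\in\mathbb{R}^{d\times d}$, $r_\theta(t)\in\mathbb{R}^d$ continuous in $t$. $X_{\theta,x_0,u}$ solves $\dot x=A_\theta x+r_\theta+u$, $x(0)=x_0$; $X_{\theta,x_0}=X_{\theta,x_0,0}$. True parameter $\theta^*\in\Theta$, true initial condition $x_0^*$, true trajectory $X^*=X_{\theta^*,x_0^*}$, true output $Y^*=CX^*$. $S(Y;\theta,\lambda)=\inf_{x_0\in\mathbb{R}^d}\inf_{u\in L^2}\{x_0^TQx_0+\int_0^T(\|Y-CX_{\theta,x_0,u}\|_2^2+\lambda\|u\|_2^2)dt\}$ with $Q=0$. $\Phi_\theta$ is the resolvent of $\dot x=A_\theta x$, $O_\theta(T)=\int_0^T\Phi_\theta(t,0)^TC^TC\Phi_\theta(t,0)dt$. Conditions: C1: $\Theta$ compact, $\theta^*$ in its interior. C2a: $Q=0$ and $O_\theta(T)$ nonsingular for all $\theta\in\Theta$. C2b: for all $(\theta,x_0)\in\Theta\times\mathbb{R}^d$, $CX_{\theta,x_0}=CX_{\theta^*,x_0^*}$ implies $(\theta,x_0)=(\theta^*,x_0^* )$. *)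

theory Defs
  imports "HOL-Analysis.Analysis"
begin

definition L2_on :: "real \<Rightarrow> (real \<Rightarrow> real^'d) \<Rightarrow> bool" where
  "L2_on T u \<longleftrightarrow> u measurable_on {0..T} \<and> (\<lambda>t. (norm (u t))^2) integrable_on {0..T}"

definition traj :: "real \<Rightarrow> (real \<Rightarrow> real^'d^'d) \<Rightarrow> (real \<Rightarrow> real^'d)
    \<Rightarrow> real^'d \<Rightarrow> (real \<Rightarrow> real^'d) \<Rightarrow> real \<Rightarrow> real^'d" where
  "traj T A r x0 u = (THE x. (\<forall>t\<in>{0..T}. x t = x0 + integral {0..t} (\<lambda>s. A s *v x s + r s + u s))
                          \<and> (\<forall>t. t \<notin> {0..T} \<longrightarrow> x t = 0))"

definition resolvent0 :: "real \<Rightarrow> (real \<Rightarrow> real^'d^'d) \<Rightarrow> real \<Rightarrow> real^'d^'d" where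
  "resolvent0 T A = (THE P. (\<forall>t\<in>{0..T}. P t = mat 1 + integral {0..t} (\<lambda>s. A s ** P s))
                          \<and> (\<forall>t. t \<notin> {0..T} \<longrightarrow> P t = 0))"

definition obs_gram :: "real \<Rightarrow> real^'d^'o \<Rightarrow> (real \<Rightarrow> real^'d^'d) \<Rightarrow> real^'d^'d" where
  "obs_gram T C A = integral {0..T}
     (\<lambda>t. transpose (resolvent0 T A t) ** transpose C ** C ** resolvent0 T A t)"

definition S_cost :: "real \<Rightarrow> real^'d^'o \<Rightarrow> real^'d^'d \<Rightarrow> ('p \<Rightarrow> real \<Rightarrow> real^'d^'d)
    \<Rightarrow> ('p \<Rightarrow> real \<Rightarrow> real^'d) \<Rightarrow> (real \<Rightarrow> real^'o) \<Rightarrow> 'p \<Rightarrow> real \<Rightarrow> real" where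
  "S_cost T C Q A r Y \<theta> lam = Inf {x0 \<bullet> (Q *v x0)
       + integral {0..T} (\<lambda>t. (norm (Y t - C *v traj T (A \<theta>) (r \<theta>) x0 u t))^2 + lam * (norm (u t))^2)
     | x0 u. L2_on T u}"

end

theory Submission
  imports Defs
begin

lemma matvec_bound:
  fixes A :: "real^'n^'m"
  shows "norm (A *v x) \<le> real CARD('m) * real CARD('n) * norm A * norm x"
proof -
  have "onorm ((*v) A) \<le> real CARD('m) * real CARD('n) * norm A"
  proof (rule onorm_le_matrix_component)
    fix i j
    have "\<bar>A $ i $ j\<bar> \<le> norm (A $ i)" by (rule component_le_norm_cart)
    also have "\<dots> \<le> norm A" by (rule Finite_Cartesian_Product.norm_nth_le)
    finally show "\<bar>A $ i $ j\<bar> \<le> norm A" .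
  qed
  then show ?thesis
    using onorm[OF matrix_vector_mul_bounded_linear, of A x]
    by (meson mult_right_mono norm_ge_zero order_trans)
qed

lemma exp_integral_bound:
  fixes L t :: real
  assumes "L > 0" "t \<ge> 0"
  shows "((\<lambda>s. exp (L * s)) has_integral (exp (L*t) - 1) / L) {0..t}"
proof -
  have "((\<lambda>s. exp (L * s)) has_integral (exp (L*t)/L - exp (L*0)/L)) {0..t}"
    apply (rule fundamental_theorem_of_calculus[OF assms(2)])
    using assms(1)
    by (auto intro!: derivative_eq_intros simp: has_real_derivative_iff_has_vector_derivative[symmetric])
  then show ?thesis by (simp add: diff_divide_distrib)
qed

lemma gronwall:
  fixes \<phi> :: "real \<Rightarrow> real"
  assumes cont: "continuous_on {0..a} \<phi>" and nn: "\<And>t. t\<in>{0..a} \<Longrightarrow> 0 \<le> \<phi> t"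
    and K: "K \<ge> 0" and c: "c \<ge> 0"
    and le: "\<And>t. t\<in>{0..a} \<Longrightarrow> \<phi> t \<le> c + K * integral {0..t} \<phi>"
    and t: "t \<in> {0..a}"
  shows "\<phi> t \<le> 2 * c * exp ((2*K+1)*a)"
proof -
  define L where "L = 2*K+1"
  have L: "L > 0" "K / L \<le> 1/2" using K by (auto simp: L_def field_simps)
  define \<psi> where "\<psi> s = exp (-(L * s)) * \<phi> s" for s
  have "continuous_on {0..a} \<psi>" unfolding \<psi>_def by (intro continuous_intros cont)
  then obtain s0 where s0: "s0 \<in> {0..a}" and max: "\<And>s. s\<in>{0..a} \<Longrightarrow> \<psi> s \<le> \<psi> s0"
    using continuous_attains_sup[of "{0..a}" \<psi>] t by fastforce
  define m where "m = \<psi> s0"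
  have m0: "m \<ge> 0" using nn[OF s0] by (simp add: m_def \<psi>_def)
  have phile: "\<phi> s \<le> m * exp (L * s)" if "s \<in> {0..a}" for s
  proof -
    have "\<psi> s \<le> m" using max[OF that] by (simp add: m_def)
    then have "exp (L * s) * \<psi> s \<le> exp (L * s) * m" by simp
    moreover have "exp (L * s) * \<psi> s = \<phi> s" by (simp add: \<psi>_def exp_minus field_simps)
    ultimately show ?thesis by (metis mult.commute mult_right_mono exp_ge_zero)
  qed
  have intle: "integral {0..s} \<phi> \<le> m * exp (L * s) / L" if "s \<in> {0..a}" for s
  proof -
    have "integral {0..s} \<phi> \<le> integral {0..s} (\<lambda>v. m * exp (L * v))"
    proof (rule integral_le)
      show "\<phi> integrable_on {0..s}"
        by (rule integrable_continuous_interval, rule continuous_on_subset[OF cont]) (use that in auto)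
      show "(\<lambda>v. m * exp (L * v)) integrable_on {0..s}"
        by (intro integrable_continuous_interval continuous_intros)
      show "\<And>x. x \<in> {0..s} \<Longrightarrow> \<phi> x \<le> m * exp (L * x)" using phile that by auto
    qed
    also have "\<dots> = m * ((exp (L * s) - 1) / L)"
      using exp_integral_bound[OF L(1), of s] that by (simp add: integral_unique)
    also have "\<dots> \<le> m * exp (L * s) / L" using m0 L by (simp add: divide_right_mono mult_left_mono)
    finally show ?thesis .
  qed
  have "\<phi> s0 \<le> c + K * (m * exp (L * s0) / L)"
    using le[OF s0] intle[OF s0] K by (smt (verit) mult_left_mono)
  then have "exp (-(L * s0)) * \<phi> s0 \<le> exp (-(L * s0)) * (c + K * (m * exp (L * s0) / L))"
    by simp
  also have "\<dots> = exp (-(L * s0)) * c + (K/L) * m"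
    by (simp add: field_simps exp_minus)
  also have "\<dots> \<le> c + (1/2) * m"
  proof -
    have "exp (-(L * s0)) \<le> 1" using L s0 by simp
    then have "exp (-(L * s0)) * c \<le> c" using c by (simp add: mult_left_le_one_le)
    moreover have "(K/L) * m \<le> (1/2) * m" by (rule mult_right_mono[OF L(2) m0])
    ultimately show ?thesis by linarith
  qed
  finally have "m \<le> 2*c" by (simp add: m_def \<psi>_def)
  then have "\<phi> t \<le> 2*c * exp (L*t)" using phile[OF t] by (smt (verit) exp_gt_zero mult_right_mono)
  also have "\<dots> \<le> 2*c*exp (L*a)" using t L c by (auto intro!: mult_left_mono)
  finally show ?thesis by (simp add: L_def)
qed

lemma continuous_on_mv:
  fixes A :: "real \<Rightarrow> real^'n^'m"
  assumes "continuous_on S A" "continuous_on S y"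
  shows "continuous_on S (\<lambda>s. A s *v y s)"
  unfolding matrix_vector_mult_def
  by (intro continuous_on_vec_lambda continuous_intros continuous_on_component assms)

lemma cont_bound:
  fixes f :: "real \<Rightarrow> 'a::real_normed_vector"
  shows "compact S \<Longrightarrow> continuous_on S f \<Longrightarrow> \<exists>B>0. \<forall>x\<in>S. norm (f x) \<le> B"
  by (metis bounded_pos compact_continuous_image compact_imp_bounded image_eqI)

lemma A_bound:
  fixes A :: "real \<Rightarrow> real^'n^'m"
  assumes "continuous_on {0..T} A"
  obtains K where "K \<ge> 0" "\<And>s v. s \<in> {0..T} \<Longrightarrow> norm (A s *v v) \<le> K * norm v"
proof -
  obtain B where B: "B > 0" "\<And>s. s\<in>{0..T} \<Longrightarrow> norm (A s) \<le> B"
    using cont_bound[OF compact_Icc assms] by blast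
  show ?thesis
  proof (rule that[of "real CARD('m) * real CARD('n) * B"])
    show "0 \<le> real CARD('m) * real CARD('n) * B" using B by simp
    fix s v assume s: "s \<in> {0..T}"
    have "norm (A s *v v) \<le> real CARD('m) * real CARD('n) * norm (A s) * norm v"
      by (rule matvec_bound)
    also have "\<dots> \<le> real CARD('m) * real CARD('n) * B * norm v"
      using B(2)[OF s] by (intro mult_right_mono mult_left_mono) auto
    finally show "norm (A s *v v) \<le> real CARD('m) * real CARD('n) * B * norm v" .
  qed
qed

definition solp :: "real \<Rightarrow> (real \<Rightarrow> real^'d^'d) \<Rightarrow> (real \<Rightarrow> real^'d) \<Rightarrow> real^'d \<Rightarrow> (real \<Rightarrow> real^'d) \<Rightarrow> bool" where
  "solp T A f x0 x \<longleftrightarrow> (\<forall>t\<in>{0..T}. x t = x0 + integral {0..t} (\<lambda>s. A s *v x s + f s))"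

lemma ode_exists:
  fixes A :: "real \<Rightarrow> real^'d^'d" and f :: "real \<Rightarrow> real^'d"
  assumes T: "T \<ge> 0" and Ac: "continuous_on {0..T} A" and fi: "f integrable_on {0..T}"
  shows "\<exists>x. continuous_on {0..T} x \<and> solp T A f x0 x"
proof -
  obtain K where K: "K \<ge> 0" "\<And>s v. s \<in> {0..T} \<Longrightarrow> norm (A s *v v) \<le> K * norm v"
    using A_bound[OF Ac] by blast
  define L where "L = 2*K+1"
  have L: "L > 0" "K / L \<le> 1/2" using K by (auto simp: L_def field_simps)
  define cl where "cl t = max 0 (min T t)" for t :: real
  have cl: "cl t \<in> {0..T}" for t using T by (auto simp: cl_def)
  have clc: "continuous_on UNIV cl" unfolding cl_def by (intro continuous_intros)
  have clid: "t \<in> {0..T} \<Longrightarrow> cl t = t" for t by (auto simp: cl_def)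
  define F where "F t = integral {0..t} f" for t
  have Fc: "continuous_on {0..T} F" unfolding F_def by (rule indefinite_integral_continuous_1[OF fi])
  define h where "h (y::real \<Rightarrow>\<^sub>C (real^'d)) s = exp (L * s) *\<^sub>R (A s *v apply_bcontfun y s)" for y s
  have hc: "continuous_on {0..T} (h y)" for y
    unfolding h_def by (intro continuous_intros continuous_on_mv Ac continuous_on_apply_bcontfun)
  have hi: "h y integrable_on {0..t}" if "t \<le> T" for y t
    using integrable_continuous_interval[OF hc[of y]] integrable_on_subinterval that by fastforce
  define g where "g y \<tau> = exp (-(L * \<tau>)) *\<^sub>R (x0 + F \<tau> + integral {0..\<tau>} (h y))" for y \<tau>
  have gc: "continuous_on {0..T} (g y)" for y
    unfolding g_def
    by (intro continuous_intros Fc indefinite_integral_continuous_1 integrable_continuous_interval hc)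
  have gb: "(\<lambda>t. g y (cl t)) \<in> bcontfun" for y
  proof -
    obtain B where B: "B > 0" "\<And>s. s\<in>{0..T} \<Longrightarrow> norm (g y s) \<le> B"
      using cont_bound[OF compact_Icc gc[of y]] by blast
    show ?thesis
    proof (rule bcontfun_normI)
      show "continuous_on UNIV (\<lambda>t. g y (cl t))"
        by (rule continuous_on_compose2[OF gc clc]) (use cl in auto)
      show "norm (g y (cl t)) \<le> B" for t using B(2)[OF cl] .
    qed
  qed
  define G where "G y = Bcontfun (\<lambda>t. g y (cl t))" for y
  have Gapp: "apply_bcontfun (G y) t = g y (cl t)" for y t
    unfolding G_def using gb[of y] by (simp add: Bcontfun_inverse)
  have contr: "dist (G y) (G z) \<le> (1/2) * dist y z" for y z
  proof (rule dist_bound)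
    fix t
    define \<tau> where "\<tau> = cl t"
    have \<tau>: "\<tau> \<in> {0..T}" using cl by (simp add: \<tau>_def)
    have "g y \<tau> - g z \<tau> = exp (-(L * \<tau>)) *\<^sub>R (integral {0..\<tau>} (h y) - integral {0..\<tau>} (h z))"
      by (simp add: g_def algebra_simps)
    also have "integral {0..\<tau>} (h y) - integral {0..\<tau>} (h z)
        = integral {0..\<tau>} (\<lambda>s. exp (L * s) *\<^sub>R (A s *v (apply_bcontfun y s - apply_bcontfun z s)))"
      using hi[of \<tau> y] hi[of \<tau> z] \<tau>
      by (simp add: integral_diff[symmetric] h_def matrix_vector_mult_diff_distrib scaleR_diff_right)
    finally have eq: "g y \<tau> - g z \<tau> = exp (-(L * \<tau>)) *\<^sub>R
        integral {0..\<tau>} (\<lambda>s. exp (L * s) *\<^sub>R (A s *v (apply_bcontfun y s - apply_bcontfun z s)))" .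
    have "norm (integral {0..\<tau>} (\<lambda>s. exp (L * s) *\<^sub>R (A s *v (apply_bcontfun y s - apply_bcontfun z s))))
        \<le> integral {0..\<tau>} (\<lambda>s. exp (L * s) * (K * dist y z))"
    proof (rule integral_norm_bound_integral)
      show "(\<lambda>s. exp (L * s) *\<^sub>R (A s *v (apply_bcontfun y s - apply_bcontfun z s))) integrable_on {0..\<tau>}"
        using hi[of \<tau> y] hi[of \<tau> z] \<tau> integrable_diff[of "h y" "{0..\<tau>}" "h z"]
        by (simp add: h_def matrix_vector_mult_diff_distrib scaleR_diff_right)
      show "(\<lambda>s. exp (L * s) * (K * dist y z)) integrable_on {0..\<tau>}"
        by (intro integrable_continuous_interval continuous_intros)
      fix s assume s: "s \<in> {0..\<tau>}"
      then have sT: "s \<in> {0..T}" using \<tau> by auto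
      have "norm (A s *v (apply_bcontfun y s - apply_bcontfun z s)) \<le> K * norm (apply_bcontfun y s - apply_bcontfun z s)"
        by (rule K(2)[OF sT])
      also have "\<dots> \<le> K * dist y z"
        using dist_bounded[of y s z] K(1) by (simp add: dist_norm mult_left_mono)
      finally show "norm (exp (L * s) *\<^sub>R (A s *v (apply_bcontfun y s - apply_bcontfun z s))) \<le> exp (L * s) * (K * dist y z)"
        by (simp add: mult_left_mono)
    qed
    also have "\<dots> = K * dist y z * ((exp (L * \<tau>) - 1) / L)"
      using exp_integral_bound[OF L(1), of \<tau>] \<tau>
      by (simp add: integral_unique mult.commute integral_mult_right)
    also have "\<dots> \<le> K * dist y z * (exp (L * \<tau>) / L)"
      using K(1) L(1) by (intro mult_left_mono divide_right_mono) auto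
    finally have nb: "norm (integral {0..\<tau>} (\<lambda>s. exp (L * s) *\<^sub>R (A s *v (apply_bcontfun y s - apply_bcontfun z s))))
        \<le> K * dist y z * (exp (L * \<tau>) / L)" .
    have "norm (g y \<tau> - g z \<tau>) \<le> exp (-(L * \<tau>)) * (K * dist y z * (exp (L * \<tau>) / L))"
      unfolding eq norm_scaleR using mult_left_mono[OF nb exp_ge_zero] by simp
    also have "\<dots> = (K / L) * dist y z" by (simp add: exp_minus field_simps)
    also have "\<dots> \<le> (1/2) * dist y z" by (rule mult_right_mono[OF L(2) zero_le_dist])
    finally show "dist (apply_bcontfun (G y) t) (apply_bcontfun (G z) t) \<le> (1/2) * dist y z"
      by (simp add: Gapp \<tau>_def dist_norm)
  qed
  obtain y where fixy: "G y = y" using banach_fix_type[of "1/2" G] contr by auto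
  define x where "x t = exp (L * t) *\<^sub>R apply_bcontfun y t" for t
  have xc: "continuous_on {0..T} x" unfolding x_def by (intro continuous_intros continuous_on_apply_bcontfun)
  have "solp T A f x0 x"
    unfolding solp_def
  proof
    fix t assume t: "t \<in> {0..T}"
    have "apply_bcontfun y t = g y t" using Gapp[of y t] fixy clid[OF t] by simp
    then have "x t = x0 + F t + integral {0..t} (h y)"
      by (simp add: x_def g_def exp_minus)
    also have "integral {0..t} (h y) = integral {0..t} (\<lambda>s. A s *v x s)"
      by (rule integral_cong) (simp add: h_def x_def matrix_vector_mult_scaleR)
    finally have xt: "x t = x0 + F t + integral {0..t} (\<lambda>s. A s *v x s)" .
    have eq2: "F t + integral {0..t} (\<lambda>s. A s *v x s) = integral {0..t} (\<lambda>s. A s *v x s + f s)"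
    proof -
      have "(\<lambda>s. A s *v x s) integrable_on {0..t}"
        using hi[of t y] t by (simp add: h_def[abs_def] x_def matrix_vector_mult_scaleR)
      moreover have "f integrable_on {0..t}" using fi t integrable_on_subinterval by fastforce
      ultimately show ?thesis by (simp add: F_def integral_add)
    qed
    show "x t = x0 + integral {0..t} (\<lambda>s. A s *v x s + f s)" using xt eq2 by (simp add: add.assoc)
  qed
  with xc show ?thesis by blast
qed

lemma ode_unique:
  fixes A :: "real \<Rightarrow> real^'d^'d" and f :: "real \<Rightarrow> real^'d"
  assumes T: "T \<ge> 0" and Ac: "continuous_on {0..T} A" and fi: "f integrable_on {0..T}"
    and sx: "solp T A f x0 x" and sy: "solp T A f x0 y" and yc: "continuous_on {0..T} y"
    and t: "t \<in> {0..T}"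
  shows "x t = y t"
proof -
  obtain K where K: "K \<ge> 0" "\<And>s v. s \<in> {0..T} \<Longrightarrow> norm (A s *v v) \<le> K * norm v"
    using A_bound[OF Ac] by blast
  define gx where "gx s = A s *v x s + f s" for s
  define gy where "gy s = A s *v y s + f s" for s
  have gyi: "gy integrable_on {0..T}"
    unfolding gy_def
    by (intro integrable_add fi integrable_continuous_interval continuous_on_mv Ac yc)
  have gyis: "gy integrable_on {0..s}" if "s \<le> T" for s
    using gyi that integrable_on_subinterval by fastforce
  have fis: "f integrable_on {a..b}" if "0 \<le> a" "b \<le> T" for a b
    using fi that integrable_on_subinterval by fastforce
  have xeq: "x s = x0 + integral {0..s} gx" if "s \<in> {0..T}" for s
    using sx that unfolding solp_def gx_def by blast
  have yeq: "y s = x0 + integral {0..s} gy" if "s \<in> {0..T}" for s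
    using sy that unfolding solp_def gy_def by blast
  have U1: "x s = y s" if t1: "t1 \<le> T" and gxi: "gx integrable_on {0..t1}" and s: "s \<in> {0..t1}" for t1 s
  proof -
    have sub: "{0..t1} \<subseteq> {0..T}" using t1 by auto
    have xc: "continuous_on {0..t1} x"
    proof (rule continuous_on_eq)
      show "continuous_on {0..t1} (\<lambda>s. x0 + integral {0..s} gx)"
        by (intro continuous_intros indefinite_integral_continuous_1 gxi)
      show "\<And>s. s \<in> {0..t1} \<Longrightarrow> x0 + integral {0..s} gx = x s" using xeq sub by auto
    qed
    define \<phi> where "\<phi> s = norm (x s - y s)" for s
    have \<phi>c: "continuous_on {0..t1} \<phi>"
      unfolding \<phi>_def by (intro continuous_intros xc continuous_on_subset[OF yc sub])
    have le: "\<phi> s \<le> 0 + K * integral {0..s} \<phi>" if s: "s \<in> {0..t1}" for s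
    proof -
      have gxs: "gx integrable_on {0..s}" using gxi s integrable_on_subinterval by fastforce
      have gys: "gy integrable_on {0..s}" using gyis s t1 by auto
      have "x s - y s = integral {0..s} (\<lambda>v. gx v - gy v)"
        using xeq yeq s sub integral_diff[OF gxs gys] by auto
      also have "\<dots> = integral {0..s} (\<lambda>v. A v *v (x v - y v))"
        by (simp add: gx_def gy_def matrix_vector_mult_diff_distrib)
      finally have eq: "x s - y s = integral {0..s} (\<lambda>v. A v *v (x v - y v))" .
      have "norm (integral {0..s} (\<lambda>v. A v *v (x v - y v))) \<le> integral {0..s} (\<lambda>v. K * \<phi> v)"
      proof (rule integral_norm_bound_integral)
        show "(\<lambda>v. A v *v (x v - y v)) integrable_on {0..s}"
          using integrable_diff[OF gxs gys] by (simp add: gx_def gy_def matrix_vector_mult_diff_distrib)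
        show "(\<lambda>v. K * \<phi> v) integrable_on {0..s}"
          using s by (intro integrable_continuous_interval continuous_intros continuous_on_subset[OF \<phi>c]) auto
        show "norm (A v *v (x v - y v)) \<le> K * \<phi> v" if "v \<in> {0..s}" for v
          unfolding \<phi>_def by (rule K(2)) (use that s sub in auto)
      qed
      moreover have "\<phi> s = norm (integral {0..s} (\<lambda>v. A v *v (x v - y v)))" using eq by (simp add: \<phi>_def)
      ultimately show ?thesis by simp
    qed
    have "\<phi> s \<le> 2 * 0 * exp ((2*K+1)*t1)"
      by (rule gronwall[OF \<phi>c _ K(1) order_refl le s]) (simp add: \<phi>_def)
    then show ?thesis by (simp add: \<phi>_def)
  qed
  define S where "S = {t\<in>{0..T}. gx integrable_on {0..t}}"
  have i0: "gx integrable_on {0..0}" using integrable_on_refl[of gx 0] by (simp only: cbox_interval)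
  have S0: "0 \<in> S" unfolding S_def by (rule CollectI, rule conjI[OF _ i0]) (use T in simp)
  have Sb: "bdd_above S" unfolding S_def by (rule bdd_aboveI[of _ T]) auto
  define t0 where "t0 = Sup S"
  have t0a: "0 \<le> t0" unfolding t0_def by (rule cSup_upper[OF S0 Sb])
  have t0b: "t0 \<le> T" unfolding t0_def
  proof (rule cSup_least)
    show "S \<noteq> {}" using S0 by blast
    show "\<And>x. x \<in> S \<Longrightarrow> x \<le> T" unfolding S_def by simp
  qed
  note t0 = t0a t0b
  have xy0: "x s = y s" if s0: "0 \<le> s" "s < t0" for s
  proof -
    have "\<exists>t'\<in>S. s < t'" using s0(2) less_cSup_iff[of S s] S0 Sb unfolding t0_def by blast
    then obtain t' where "t' \<in> S" "s < t'" by blast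
    then show ?thesis using U1[of t' s] s0 by (auto simp: S_def)
  qed
  have gxt0: "gx integrable_on {0..t0}"
  proof (rule integrable_spike[OF gyis[OF t0(2)] negligible_sing[of t0]])
    fix v assume "v \<in> {0..t0} - {t0}"
    then show "gx v = gy v" using xy0[of v] by (simp add: gx_def gy_def)
  qed
  have TS: "T \<in> S"
  proof (cases "t0 = T")
    case True then show ?thesis using gxt0 T by (simp add: S_def)
  next
    case False
    then have lt: "t0 < T" using t0 by simp
    have xc0: "x v = x0" if "v \<in> {t0<..T}" for v
    proof -
      have "v \<notin> S" using cSup_upper[of v S] Sb that by (auto simp: t0_def)
      then have "\<not> gx integrable_on {0..v}" using that t0 by (simp add: S_def)
      then show ?thesis using xeq[of v] that t0 by (simp add: not_integrable_integral)
    qed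
    have "gx integrable_on {t0..T}"
    proof (rule integrable_spike[OF _ negligible_sing[of t0]])
      show "(\<lambda>v. A v *v x0 + f v) integrable_on {t0..T}"
        using t0 by (intro integrable_add fis integrable_continuous_interval continuous_on_mv
              continuous_on_subset[OF Ac] continuous_intros) auto
      fix v assume "v \<in> {t0..T} - {t0}"
      then show "gx v = A v *v x0 + f v" using xc0[of v] by (simp add: gx_def)
    qed
    then have "gx integrable_on {0..T}" using Henstock_Kurzweil_Integration.integrable_combine[OF t0 gxt0] by blast
    then show ?thesis using T by (simp add: S_def)
  qed
  show ?thesis using U1[of T t] TS t by (simp add: S_def)
qed

lemma traj_char:
  fixes A :: "real \<Rightarrow> real^'d^'d" and r u :: "real \<Rightarrow> real^'d"
  assumes T: "T \<ge> 0" and Ac: "continuous_on {0..T} A" and rc: "continuous_on {0..T} r"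
    and ui: "u integrable_on {0..T}"
  shows "continuous_on {0..T} (traj T A r x0 u) \<and> solp T A (\<lambda>s. r s + u s) x0 (traj T A r x0 u)"
proof -
  define f where "f s = r s + u s" for s
  have fi: "f integrable_on {0..T}" unfolding f_def by (intro integrable_add ui integrable_continuous_interval rc)
  obtain x where xc: "continuous_on {0..T} x" and sx: "solp T A f x0 x" using ode_exists[OF T Ac fi] by blast
  define x' where "x' t = (if t \<in> {0..T} then x t else 0)" for t
  have eqv: "(\<forall>t\<in>{0..T}. z t = x0 + integral {0..t} (\<lambda>s. A s *v z s + r s + u s)) \<longleftrightarrow> solp T A f x0 z" for z
    by (simp add: solp_def f_def add.assoc)
  have x'c: "continuous_on {0..T} x'"
    by (rule continuous_on_eq[OF xc]) (simp add: x'_def)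
  have sx': "solp T A f x0 x'"
    unfolding solp_def
  proof
    fix t assume t: "t \<in> {0..T}"
    have "x' t = x0 + integral {0..t} (\<lambda>s. A s *v x s + f s)" using sx t by (simp add: solp_def x'_def)
    also have "integral {0..t} (\<lambda>s. A s *v x s + f s) = integral {0..t} (\<lambda>s. A s *v x' s + f s)"
      by (rule integral_cong) (use t in \<open>simp add: x'_def\<close>)
    finally show "x' t = x0 + integral {0..t} (\<lambda>s. A s *v x' s + f s)" .
  qed
  have "traj T A r x0 u = x'"
    unfolding traj_def
  proof (rule the_equality)
    show "(\<forall>t\<in>{0..T}. x' t = x0 + integral {0..t} (\<lambda>s. A s *v x' s + r s + u s)) \<and> (\<forall>t. t \<notin> {0..T} \<longrightarrow> x' t = 0)"
      using sx' eqv[of x'] by (simp add: x'_def)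
    fix z assume z: "(\<forall>t\<in>{0..T}. z t = x0 + integral {0..t} (\<lambda>s. A s *v z s + r s + u s)) \<and> (\<forall>t. t \<notin> {0..T} \<longrightarrow> z t = 0)"
    then have sz: "solp T A f x0 z" using eqv by blast
    show "z = x'"
    proof
      fix t show "z t = x' t"
      proof (cases "t \<in> {0..T}")
        case True then show ?thesis using ode_unique[OF T Ac fi sz sx' x'c True] by simp
      next
        case False then show ?thesis using z unfolding x'_def by auto
      qed
    qed
  qed
  then show ?thesis using x'c sx' by (simp add: f_def[abs_def])
qed

lemma dev_bound:
  fixes A :: "real \<Rightarrow> real^'d^'d" and r u :: "real \<Rightarrow> real^'d"
  assumes T: "T \<ge> 0" and Ac: "continuous_on {0..T} A" and rc: "continuous_on {0..T} r"
    and ua: "u absolutely_integrable_on {0..T}"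
    and K: "K \<ge> 0" "\<And>s v. s \<in> {0..T} \<Longrightarrow> norm (A s *v v) \<le> K * norm v"
    and t: "t \<in> {0..T}"
  shows "norm (traj T A r x0 u t - traj T A r x0 (\<lambda>_. 0) t)
           \<le> 2 * integral {0..T} (\<lambda>s. norm (u s)) * exp ((2*K+1)*T)"
proof -
  have ui: "u integrable_on {0..T}" and nui: "(\<lambda>s. norm (u s)) integrable_on {0..T}"
    using ua by (auto simp: absolutely_integrable_on_def)
  define Xu where "Xu = traj T A r x0 u"
  define X0 where "X0 = traj T A r x0 (\<lambda>_. 0)"
  have cu: "continuous_on {0..T} Xu" and su: "solp T A (\<lambda>s. r s + u s) x0 Xu"
    using traj_char[OF T Ac rc ui] by (auto simp: Xu_def)
  have c0: "continuous_on {0..T} X0" and s0: "solp T A (\<lambda>s. r s + 0) x0 X0"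
    using traj_char[OF T Ac rc integrable_0] by (auto simp: X0_def)
  define D where "D s = Xu s - X0 s" for s
  have Dc: "continuous_on {0..T} D" unfolding D_def by (intro continuous_intros cu c0)
  define c where "c = integral {0..T} (\<lambda>s. norm (u s))"
  have c0': "c \<ge> 0" unfolding c_def by (rule integral_nonneg[OF nui]) simp
  have le: "norm (D s) \<le> c + K * integral {0..s} (\<lambda>v. norm (D v))" if s: "s \<in> {0..T}" for s
  proof -
    have sub: "{0..s} \<subseteq> {0..T}" using s by auto
    have uis: "u integrable_on {0..s}" using ui s integrable_on_subinterval by fastforce
    have nuis: "(\<lambda>v. norm (u v)) integrable_on {0..s}" using nui s integrable_on_subinterval by fastforce
    have i1: "(\<lambda>v. A v *v Xu v + (r v + u v)) integrable_on {0..s}"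
      by (intro integrable_add uis integrable_continuous_interval continuous_on_mv
          continuous_on_subset[OF Ac sub] continuous_on_subset[OF cu sub] continuous_on_subset[OF rc sub])
    have i0: "(\<lambda>v. A v *v X0 v + (r v + 0)) integrable_on {0..s}"
      by (intro integrable_add integrable_0 integrable_continuous_interval continuous_on_mv
          continuous_on_subset[OF Ac sub] continuous_on_subset[OF c0 sub] continuous_on_subset[OF rc sub])
    have iD: "(\<lambda>v. A v *v D v) integrable_on {0..s}"
      by (intro integrable_continuous_interval continuous_on_mv
          continuous_on_subset[OF Ac sub] continuous_on_subset[OF Dc sub])
    have "D s = integral {0..s} (\<lambda>v. A v *v Xu v + (r v + u v)) - integral {0..s} (\<lambda>v. A v *v X0 v + (r v + 0))"
      using su s0 s by (simp add: solp_def D_def)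
    also have "\<dots> = integral {0..s} (\<lambda>v. (A v *v Xu v + (r v + u v)) - (A v *v X0 v + (r v + 0)))"
      by (rule integral_diff[OF i1 i0, symmetric])
    also have "\<dots> = integral {0..s} (\<lambda>v. A v *v D v + u v)"
      by (rule integral_cong) (simp add: D_def matrix_vector_mult_diff_distrib algebra_simps)
    also have "\<dots> = integral {0..s} (\<lambda>v. A v *v D v) + integral {0..s} u"
      by (rule integral_add[OF iD uis])
    finally have Ds: "D s = integral {0..s} (\<lambda>v. A v *v D v) + integral {0..s} u" .
    have n1: "norm (integral {0..s} (\<lambda>v. A v *v D v)) \<le> integral {0..s} (\<lambda>v. K * norm (D v))"
    proof (rule integral_norm_bound_integral[OF iD])
      show "(\<lambda>v. K * norm (D v)) integrable_on {0..s}"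
        by (intro integrable_continuous_interval continuous_intros continuous_on_subset[OF Dc sub])
      show "norm (A v *v D v) \<le> K * norm (D v)" if "v \<in> {0..s}" for v
        using K(2) that sub by blast
    qed
    have n2: "norm (integral {0..s} u) \<le> integral {0..s} (\<lambda>v. norm (u v))"
      by (rule integral_norm_bound_integral[OF uis nuis]) simp
    have n3: "integral {0..s} (\<lambda>v. norm (u v)) \<le> c"
      unfolding c_def by (rule integral_subset_le[OF sub nuis nui]) simp
    have "norm (D s) \<le> norm (integral {0..s} (\<lambda>v. A v *v D v)) + norm (integral {0..s} u)"
      unfolding Ds by (rule norm_triangle_ineq)
    then show ?thesis using n1 n2 n3 by (simp add: integral_mult_right)
  qed
  have "norm (D t) \<le> 2 * c * exp ((2*K+1)*T)"
    by (rule gronwall[where \<phi>="\<lambda>s. norm (D s)", OF _ _ K(1) c0' le t])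
       (auto intro!: continuous_intros Dc)
  then show ?thesis by (simp add: D_def Xu_def X0_def c_def)
qed

lemma sq_norm_add:
  fixes p q :: "'a::real_normed_vector"
  shows "(norm (p + q))^2 \<le> 2 * (norm p)^2 + 2 * (norm q)^2"
proof -
  have "norm (p + q) \<le> norm p + norm q" by (rule norm_triangle_ineq)
  then have "(norm (p + q))^2 \<le> (norm p + norm q)^2" by (simp add: power_mono)
  also have "\<dots> \<le> 2 * (norm p)^2 + 2 * (norm q)^2"
    using sum_squares_bound[of "norm p" "norm q"] by (simp add: power2_eq_square algebra_simps)
  finally show ?thesis .
qed

lemma L2_abs:
  assumes "L2_on T u"
  shows "u absolutely_integrable_on {0..T}"
proof (rule measurable_bounded_by_integrable_imp_absolutely_integrable)
  show "u \<in> borel_measurable (lebesgue_on {0..T})"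
    using assms by (intro measurable_on_imp_borel_measurable_lebesgue) (auto simp: L2_on_def)
  show "{0..T} \<in> sets lebesgue" by simp
  show "(\<lambda>t. 1 + (norm (u t))^2) integrable_on {0..T}"
    using assms by (intro integrable_add integrable_const_ivl) (auto simp: L2_on_def)
  fix t
  have "0 \<le> (norm (u t) - 1)^2" by simp
  then show "norm (u t) \<le> 1 + (norm (u t))^2"
    by (simp add: power2_diff) (smt (verit) norm_ge_zero)
qed

lemma l1_bound:
  assumes "L2_on T u" "\<delta> > 0" "T \<ge> 0"
  shows "integral {0..T} (\<lambda>s. norm (u s)) \<le> \<delta> * T + integral {0..T} (\<lambda>s. (norm (u s))^2) / \<delta>"
proof -
  have i2: "(\<lambda>s. (norm (u s))^2) integrable_on {0..T}" using assms by (simp add: L2_on_def)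
  have i1: "(\<lambda>s. norm (u s)) integrable_on {0..T}"
    using L2_abs[OF assms(1)] by (simp add: absolutely_integrable_on_def)
  have "integral {0..T} (\<lambda>s. norm (u s)) \<le> integral {0..T} (\<lambda>s. \<delta> + (norm (u s))^2 / \<delta>)"
  proof (rule integral_le[OF i1])
    show "(\<lambda>s. \<delta> + (norm (u s))^2 / \<delta>) integrable_on {0..T}"
      by (intro integrable_add integrable_const_ivl integrable_on_divide i2)
    fix s
    define n where "n = norm (u s)"
    have n0: "n \<ge> 0" by (simp add: n_def)
    have "0 \<le> (n - \<delta>)^2" by simp
    then have "2 * n * \<delta> \<le> n^2 + \<delta>^2" by (simp add: power2_diff)
    moreover have "0 \<le> n * \<delta>" using n0 assms by simp
    ultimately have "n * \<delta> \<le> \<delta> * \<delta> + n^2" by (simp add: power2_eq_square)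
    then have "n \<le> (\<delta> * \<delta> + n^2) / \<delta>" using assms by (simp add: field_simps)
    also have "\<dots> = \<delta> + n^2 / \<delta>" using assms by (simp add: field_simps)
    finally show "norm (u s) \<le> \<delta> + (norm (u s))^2 / \<delta>" by (simp add: n_def)
  qed
  also have "\<dots> = \<delta> * T + integral {0..T} (\<lambda>s. (norm (u s))^2) / \<delta>"
  proof -
    have "integral {0..T} (\<lambda>s. \<delta> + (norm (u s))^2 / \<delta>) = integral {0..T} (\<lambda>s. \<delta>) + integral {0..T} (\<lambda>s. (norm (u s))^2 / \<delta>)"
      by (rule integral_add[OF integrable_const_ivl integrable_on_divide[OF i2]])
    then show ?thesis using assms(3) by (simp add: integral_divide mult.commute)
  qed
  finally show ?thesis .
qed

lemma approx:
  fixes At :: "real \<Rightarrow> real^'d^'d" and rt :: "real \<Rightarrow> real^'d"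
    and C :: "real^'d^'o" and Y :: "real \<Rightarrow> real^'o"
  assumes T: "T > 0" and Ac: "continuous_on {0..T} At" and rc: "continuous_on {0..T} rt"
    and Yc: "continuous_on {0..T} Y" and lam: "lam > 0"
    and inf0: "Inf {integral {0..T} (\<lambda>t. (norm (Y t - C *v traj T At rt x0 u t))^2 + lam * (norm (u t))^2)
                   | x0 u. L2_on T u} = 0"
    and eps: "\<epsilon> > 0"
  shows "\<exists>x0. integral {0..T} (\<lambda>t. (norm (Y t - C *v traj T At rt x0 (\<lambda>_. 0) t))^2) < \<epsilon>"
proof -
  obtain K where K: "K \<ge> 0" "\<And>s v. s \<in> {0..T} \<Longrightarrow> norm (At s *v v) \<le> K * norm v"
    using A_bound[OF Ac] by blast
  define nC where "nC = real CARD('o) * real CARD('d) * norm C"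
  have nC0: "nC \<ge> 0" by (simp add: nC_def)
  have nCb: "norm (C *v v) \<le> nC * norm v" for v unfolding nC_def by (rule matvec_bound)
  define B where "B = nC * (2 * exp ((2*K+1)*T))"
  have B0: "B \<ge> 0" using nC0 by (simp add: B_def)
  define \<gamma> where "\<gamma> = min 1 (\<epsilon> / (4*T*B^2+1))"
  have den: "4*T*B^2+1 > 0" using T by (smt (verit) mult_nonneg_nonneg zero_le_power2)
  have \<gamma>: "\<gamma> > 0" "\<gamma> \<le> 1" "(4*T*B^2+1) * \<gamma> \<le> \<epsilon>"
  proof -
    show "\<gamma> > 0" using eps den by (simp add: \<gamma>_def)
    show "\<gamma> \<le> 1" by (simp add: \<gamma>_def)
    have "\<gamma> \<le> \<epsilon> / (4*T*B^2+1)" by (simp add: \<gamma>_def)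
    then show "(4*T*B^2+1) * \<gamma> \<le> \<epsilon>" using den by (simp add: pos_le_divide_eq mult.commute)
  qed
  define \<delta> where "\<delta> = \<gamma> / (2*T)"
  have \<delta>: "\<delta> > 0" "\<delta> * T = \<gamma>/2" using \<gamma> T by (auto simp: \<delta>_def)
  define \<eta> where "\<eta> = min (\<epsilon>/4) (lam * \<delta> * \<gamma> / 2)"
  have \<eta>: "\<eta> > 0" "\<eta> \<le> \<epsilon>/4" "\<eta> \<le> lam * \<delta> * \<gamma> / 2"
    using eps lam \<delta> \<gamma> by (auto simp: \<eta>_def)
  define V where "V = {integral {0..T} (\<lambda>t. (norm (Y t - C *v traj T At rt x0 u t))^2 + lam * (norm (u t))^2)
                   | x0 u. L2_on T u}"
  have L20: "L2_on T (\<lambda>_. 0::real^'d)" unfolding L2_on_def using integrable_0 by simp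
  have "V \<noteq> {}" unfolding V_def using L20 by blast
  moreover have "Inf V < \<eta>" using inf0 \<eta> by (simp add: V_def)
  ultimately obtain v where "v \<in> V" "v < \<eta>" using cInf_lessD by blast
  then obtain x0 u where u: "L2_on T u"
    and small: "integral {0..T} (\<lambda>t. (norm (Y t - C *v traj T At rt x0 u t))^2 + lam * (norm (u t))^2) < \<eta>"
    unfolding V_def by blast
  have ua: "u absolutely_integrable_on {0..T}" by (rule L2_abs[OF u])
  have ui: "u integrable_on {0..T}" using ua by (simp add: absolutely_integrable_on_def)
  define Xu where "Xu = traj T At rt x0 u"
  define X0 where "X0 = traj T At rt x0 (\<lambda>_. 0)"
  have cu: "continuous_on {0..T} Xu" using traj_char[OF _ Ac rc ui] T by (simp add: Xu_def)
  have c0: "continuous_on {0..T} X0" using traj_char[OF _ Ac rc integrable_0] T by (simp add: X0_def)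
  define a where "a t = (norm (Y t - C *v Xu t))^2" for t
  define b where "b t = (norm (u t))^2" for t
  have ai: "a integrable_on {0..T}" unfolding a_def
    by (intro integrable_continuous_interval continuous_intros Yc continuous_on_mv[OF continuous_on_const cu])
  have bi: "b integrable_on {0..T}" using u by (simp add: L2_on_def b_def[abs_def])
  have a0: "integral {0..T} a \<ge> 0" by (rule integral_nonneg[OF ai]) (simp add: a_def)
  have b0: "integral {0..T} b \<ge> 0" by (rule integral_nonneg[OF bi]) (simp add: b_def)
  have "integral {0..T} (\<lambda>t. a t + lam * b t) = integral {0..T} a + lam * integral {0..T} b"
    using integral_add[OF ai integrable_on_cmult_left[OF bi, of lam]] by (simp add: integral_mult_right)
  then have sum_lt: "integral {0..T} a + lam * integral {0..T} b < \<eta>"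
    using small by (simp add: a_def b_def Xu_def)
  have aint: "integral {0..T} a < \<eta>" using sum_lt b0 lam by (smt (verit) mult_nonneg_nonneg)
  have "lam * integral {0..T} b < lam * (\<delta> * \<gamma> / 2)" using sum_lt a0 \<eta>(3) by (simp add: algebra_simps)
  then have bint: "integral {0..T} b < \<delta> * \<gamma> / 2" using lam by simp
  define cu' where "cu' = integral {0..T} (\<lambda>s. norm (u s))"
  have "cu' \<le> \<delta> * T + integral {0..T} b / \<delta>"
    using l1_bound[OF u \<delta>(1)] T by (simp add: cu'_def b_def[abs_def])
  also have "integral {0..T} b / \<delta> \<le> \<gamma> / 2"
    using bint \<delta>(1) by (simp add: field_simps)
  finally have cu'le: "cu' \<le> \<gamma>" using \<delta>(2) by simp
  have cu'0: "cu' \<ge> 0" unfolding cu'_def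
    by (rule integral_nonneg) (use ua in \<open>auto simp: absolutely_integrable_on_def\<close>)
  have pw: "(norm (Y t - C *v X0 t))^2 \<le> 2 * a t + 2 * (B * \<gamma>)^2" if t: "t \<in> {0..T}" for t
  proof -
    have e: "Y t - C *v X0 t = (Y t - C *v Xu t) + C *v (Xu t - X0 t)"
      by (simp add: matrix_vector_mult_diff_distrib)
    have "(norm (Y t - C *v X0 t))^2 \<le> 2 * a t + 2 * (norm (C *v (Xu t - X0 t)))^2"
      unfolding e a_def by (rule sq_norm_add)
    moreover have "norm (C *v (Xu t - X0 t)) \<le> B * \<gamma>"
    proof -
      have "norm (Xu t - X0 t) \<le> 2 * cu' * exp ((2*K+1)*T)"
        using dev_bound[OF _ Ac rc ua K t] T by (simp add: Xu_def X0_def cu'_def)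
      also have "\<dots> \<le> 2 * \<gamma> * exp ((2*K+1)*T)" using cu'le by simp
      finally have "nC * norm (Xu t - X0 t) \<le> nC * (2 * \<gamma> * exp ((2*K+1)*T))"
        using nC0 by (simp add: mult_left_mono)
      then show ?thesis using nCb[of "Xu t - X0 t"] by (simp add: B_def algebra_simps)
    qed
    then have "(norm (C *v (Xu t - X0 t)))^2 \<le> (B * \<gamma>)^2" by (simp add: power_mono)
    ultimately show ?thesis by simp
  qed
  have X0i: "(\<lambda>t. (norm (Y t - C *v X0 t))^2) integrable_on {0..T}"
    by (intro integrable_continuous_interval continuous_intros Yc continuous_on_mv[OF continuous_on_const c0])
  have "integral {0..T} (\<lambda>t. (norm (Y t - C *v X0 t))^2) \<le> integral {0..T} (\<lambda>t. 2 * a t + 2 * (B * \<gamma>)^2)"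
    by (rule integral_le[OF X0i]) (use pw ai in \<open>auto intro!: integrable_add integrable_const_ivl\<close>)
  also have "\<dots> = 2 * integral {0..T} a + T * (2 * (B * \<gamma>)^2)"
  proof -
    have "integral {0..T} (\<lambda>t. 2 * a t + 2 * (B * \<gamma>)^2) = integral {0..T} (\<lambda>t. 2 * a t) + integral {0..T} (\<lambda>t. 2 * (B * \<gamma>)^2)"
      by (rule integral_add[OF integrable_on_mult_right[OF ai] integrable_const_ivl])
    then show ?thesis using T by (simp add: integral_mult_right)
  qed
  also have "\<dots> < \<epsilon>"
  proof -
    have "2 * integral {0..T} a < \<epsilon> / 2" using aint \<eta>(2) by simp
    moreover have "T * (2 * (B * \<gamma>)^2) \<le> \<epsilon> / 2"
    proof -
      have "\<gamma>^2 \<le> \<gamma>" using \<gamma> by (simp add: power2_eq_square mult_left_le_one_le)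
      then have "T * (2 * (B * \<gamma>)^2) \<le> T * (2 * B^2 * \<gamma>)"
        using T by (simp add: power_mult_distrib mult_left_mono)
      also have "\<dots> \<le> \<epsilon> / 2" using \<gamma>(3) \<gamma>(1) by (simp add: algebra_simps)
      finally show ?thesis .
    qed
    ultimately show ?thesis by simp
  qed
  finally show ?thesis unfolding X0_def by blast
qed

lemma cont_zero:
  fixes g :: "real \<Rightarrow> real"
  assumes T: "T > 0" and gc: "continuous_on {0..T} g" and g0: "\<And>t. t \<in> {0..T} \<Longrightarrow> g t \<ge> 0"
    and gi: "integral {0..T} g = 0" and t: "t \<in> {0..T}"
  shows "g t = 0"
proof (rule has_integral_0_cbox_imp_0[of 0 T g])
  show "continuous_on (cbox 0 T) g" using gc by simp
  show "\<And>x. x \<in> box 0 T \<Longrightarrow> 0 \<le> g x" using g0 by (auto simp: box_real)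
  show "(g has_integral 0) (cbox 0 T)"
    using integrable_continuous_interval[OF gc] gi by (simp add: has_integral_integral)
  show "box 0 T \<noteq> {}" using T by (simp add: box_real)
  show "t \<in> cbox 0 T" using t by simp
qed

lemma cint:
  fixes g :: "real \<Rightarrow> 'a::banach"
  shows "continuous_on {0..T} g \<Longrightarrow> t \<in> {0..T} \<Longrightarrow> g integrable_on {0..t}"
  by (rule integrable_continuous_interval) (auto elim: continuous_on_subset)

lemma finite_dim:
  fixes At :: "real \<Rightarrow> real^'d^'d" and rt :: "real \<Rightarrow> real^'d"
    and C :: "real^'d^'o" and Y :: "real \<Rightarrow> real^'o"
  assumes T: "T > 0" and Ac: "continuous_on {0..T} At" and rc: "continuous_on {0..T} rt"
    and Yc: "continuous_on {0..T} Y"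
    and apx: "\<And>\<epsilon>. \<epsilon> > 0 \<Longrightarrow> \<exists>x0. integral {0..T} (\<lambda>t. (norm (Y t - C *v traj T At rt x0 (\<lambda>_. 0) t))^2) < \<epsilon>"
  shows "\<exists>a. \<forall>t\<in>{0..T}. Y t = C *v traj T At rt a (\<lambda>_. 0) t"
proof -
  have T0: "T \<ge> 0" using T by simp
  obtain K where K: "K \<ge> 0" "\<And>s v. s \<in> {0..T} \<Longrightarrow> norm (At s *v v) \<le> K * norm v"
    using A_bound[OF Ac] by blast
  define nC where "nC = real CARD('o) * real CARD('d) * norm C"
  have nC0: "nC \<ge> 0" by (simp add: nC_def)
  have nCb: "norm (C *v v) \<le> nC * norm v" for v unfolding nC_def by (rule matvec_bound)
  define X where "X x = traj T At rt x (\<lambda>_. 0)" for x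
  have Xc: "continuous_on {0..T} (X x)" and Xs: "solp T At rt x (X x)" for x
    using traj_char[OF T0 Ac rc integrable_0, of x] by (simp_all add: X_def)
  define Z where "Z x t = X x t - X 0 t" for x t
  have Zc: "continuous_on {0..T} (Z x)" for x unfolding Z_def by (intro continuous_intros Xc)
  have AZc: "continuous_on {0..T} (\<lambda>s. At s *v Z x s)" for x by (intro continuous_on_mv Ac Zc)
  have AXc: "continuous_on {0..T} (\<lambda>s. At s *v X x s + rt s)" for x by (intro continuous_intros continuous_on_mv Ac Xc rc)
  have Zeq: "Z x t = x + integral {0..t} (\<lambda>s. At s *v Z x s)" if t: "t \<in> {0..T}" for x t
  proof -
    have "Z x t = x + (integral {0..t} (\<lambda>s. At s *v X x s + rt s) - integral {0..t} (\<lambda>s. At s *v X 0 s + rt s))"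
      using Xs[of x] Xs[of 0] t by (simp add: solp_def Z_def)
    also have "integral {0..t} (\<lambda>s. At s *v X x s + rt s) - integral {0..t} (\<lambda>s. At s *v X 0 s + rt s)
        = integral {0..t} (\<lambda>s. (At s *v X x s + rt s) - (At s *v X 0 s + rt s))"
      by (rule integral_diff[symmetric]; rule cint[OF AXc t])
    also have "\<dots> = integral {0..t} (\<lambda>s. At s *v Z x s)"
      by (simp add: Z_def matrix_vector_mult_diff_distrib)
    finally show ?thesis .
  qed
  have Zs: "solp T At (\<lambda>_. 0) x (Z x)" for x using Zeq by (simp add: solp_def)
  have Zlin: "Z (a *\<^sub>R x + b *\<^sub>R y) t = a *\<^sub>R Z x t + b *\<^sub>R Z y t" if t: "t \<in> {0..T}" for a b x y t
  proof -
    define W where "W s = a *\<^sub>R Z x s + b *\<^sub>R Z y s" for s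
    have Wc: "continuous_on {0..T} W" unfolding W_def by (intro continuous_intros Zc)
    have Ws: "solp T At (\<lambda>_. 0) (a *\<^sub>R x + b *\<^sub>R y) W"
      unfolding solp_def
    proof
      fix s assume s: "s \<in> {0..T}"
      have "W s = a *\<^sub>R x + b *\<^sub>R y + (a *\<^sub>R integral {0..s} (\<lambda>v. At v *v Z x v) + b *\<^sub>R integral {0..s} (\<lambda>v. At v *v Z y v))"
        using Zeq[OF s, of x] Zeq[OF s, of y] by (simp add: W_def algebra_simps)
      also have "a *\<^sub>R integral {0..s} (\<lambda>v. At v *v Z x v) + b *\<^sub>R integral {0..s} (\<lambda>v. At v *v Z y v)
          = integral {0..s} (\<lambda>v. a *\<^sub>R (At v *v Z x v) + b *\<^sub>R (At v *v Z y v))"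
        by (subst integral_add) (auto intro!: integrable_cmul cint[OF AZc s] simp: integral_cmul)
      also have "\<dots> = integral {0..s} (\<lambda>v. At v *v W v + 0)"
        by (simp add: W_def matrix_vector_mult_scaleR matrix_vector_right_distrib)
      finally show "W s = a *\<^sub>R x + b *\<^sub>R y + integral {0..s} (\<lambda>v. At v *v W v + 0)" .
    qed
    show ?thesis using ode_unique[OF T0 Ac integrable_0 Zs Ws Wc t] by (simp add: W_def)
  qed
  have Zadd: "Z (x + y) t = Z x t + Z y t" if "t \<in> {0..T}" for x y t
    using Zlin[OF that, of 1 x 1 y] by simp
  have Zdiff: "Z (x - y) t = Z x t - Z y t" if "t \<in> {0..T}" for x y t
    using Zlin[OF that, of 1 x "-1" y] by simp
  have Zscale: "Z (c *\<^sub>R x) t = c *\<^sub>R Z x t" if "t \<in> {0..T}" for c x t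
    using Zlin[OF that, of c x 0 x] by simp
  define Bz where "Bz = 2 * exp ((2*K+1)*T)"
  have Zb: "norm (Z x t) \<le> Bz * norm x" if t: "t \<in> {0..T}" for x t
  proof -
    have "norm (Z x t) \<le> 2 * norm x * exp ((2*K+1)*T)"
    proof (rule gronwall[where \<phi>="\<lambda>s. norm (Z x s)", OF _ _ K(1) _ _ t])
      show "continuous_on {0..T} (\<lambda>s. norm (Z x s))" by (intro continuous_intros Zc)
      show "0 \<le> norm x" by simp
      fix s assume s: "s \<in> {0..T}"
      have "norm (integral {0..s} (\<lambda>v. At v *v Z x v)) \<le> integral {0..s} (\<lambda>v. K * norm (Z x v))"
        by (rule integral_norm_bound_integral) (use s K(2) in \<open>auto intro!: cint AZc continuous_intros Zc\<close>)
      then show "norm (Z x s) \<le> norm x + K * integral {0..s} (\<lambda>s. norm (Z x s))"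
        using Zeq[OF s, of x] norm_triangle_ineq[of x "integral {0..s} (\<lambda>v. At v *v Z x v)"]
        by (simp add: integral_mult_right)
    qed simp
    then show ?thesis by (simp add: Bz_def algebra_simps)
  qed
  define H where "H x t = C *v Z x t" for x t
  define Bh where "Bh = nC * Bz"
  have Bh0: "Bh \<ge> 0" using nC0 by (simp add: Bh_def Bz_def)
  have Hc: "continuous_on {0..T} (H x)" for x unfolding H_def by (intro continuous_on_mv continuous_on_const Zc)
  have Hb: "norm (H x t) \<le> Bh * norm x" if "t \<in> {0..T}" for x t
    using nCb[of "Z x t"] Zb[OF that, of x] nC0 unfolding H_def Bh_def
    by (smt (verit) mult.assoc mult_left_mono)
  have Hadd: "H (x + y) t = H x t + H y t" if "t \<in> {0..T}" for x y t
    using Zadd[OF that] by (simp add: H_def matrix_vector_right_distrib)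
  have Hdiff: "H (x - y) t = H x t - H y t" if "t \<in> {0..T}" for x y t
    using Zdiff[OF that] by (simp add: H_def matrix_vector_mult_diff_distrib)
  have Hscale: "H (c *\<^sub>R x) t = c *\<^sub>R H x t" if "t \<in> {0..T}" for c x t
    using Zscale[OF that] by (simp add: H_def matrix_vector_mult_scaleR)
  define Gq where "Gq x = integral {0..T} (\<lambda>t. (norm (H x t))^2)" for x
  have Gqi: "(\<lambda>t. (norm (H x t))^2) integrable_on {0..T}" for x
    by (intro integrable_continuous_interval continuous_intros Hc)
  have Gq0: "Gq x \<ge> 0" for x unfolding Gq_def by (rule integral_nonneg[OF Gqi]) simp
  have Gqb: "Gq x \<le> T * (Bh^2 * (norm x)^2)" for x
  proof -
    have "Gq x \<le> integral {0..T} (\<lambda>t. Bh^2 * (norm x)^2)"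
      unfolding Gq_def
    proof (rule integral_le[OF Gqi integrable_const_ivl])
      fix t assume "t \<in> {0..T}"
      then have "norm (H x t) \<le> Bh * norm x" by (rule Hb)
      then have "(norm (H x t))^2 \<le> (Bh * norm x)^2" by (simp add: power_mono)
      then show "(norm (H x t))^2 \<le> Bh^2 * (norm x)^2" by (simp add: power_mult_distrib)
    qed
    then show ?thesis using T0 by (simp add: algebra_simps)
  qed
  have Gqadd: "Gq (x + y) \<le> 2 * Gq x + 2 * Gq y" for x y
  proof -
    have "Gq (x + y) \<le> integral {0..T} (\<lambda>t. 2 * (norm (H x t))^2 + 2 * (norm (H y t))^2)"
      unfolding Gq_def
    proof (rule integral_le[OF Gqi])
      show "(\<lambda>t. 2 * (norm (H x t))^2 + 2 * (norm (H y t))^2) integrable_on {0..T}"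
        by (intro integrable_add integrable_on_mult_right Gqi)
      fix t assume "t \<in> {0..T}"
      then show "(norm (H (x + y) t))^2 \<le> 2 * (norm (H x t))^2 + 2 * (norm (H y t))^2"
        using Hadd sq_norm_add by metis
    qed
    also have "\<dots> = 2 * Gq x + 2 * Gq y"
      unfolding Gq_def
      by (subst integral_add) (auto intro!: integrable_on_mult_right Gqi simp: integral_mult_right)
    finally show ?thesis .
  qed
  have Gqscale: "Gq (c *\<^sub>R x) = c^2 * Gq x" for c x
  proof -
    have "Gq (c *\<^sub>R x) = integral {0..T} (\<lambda>t. c^2 * (norm (H x t))^2)"
      unfolding Gq_def by (rule integral_cong) (simp add: Hscale power_mult_distrib)
    then show ?thesis by (simp add: Gq_def integral_mult_right)
  qed
  define N where "N = {x. \<forall>t\<in>{0..T}. H x t = 0}"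
  have subN: "subspace N"
    unfolding subspace_def N_def
    using Hadd Hscale Hscale[of _ 0 0] by auto
  have GqN: "x \<in> N" if "Gq x = 0" for x
    unfolding N_def mem_Collect_eq
  proof
    fix t assume t: "t \<in> {0..T}"
    have "(norm (H x t))^2 = 0"
      by (rule cont_zero[OF T _ _ _ t, where g="\<lambda>t. (norm (H x t))^2"])
         (use that in \<open>auto intro!: continuous_intros Hc simp: Gq_def\<close>)
    then show "H x t = 0" by simp
  qed
  define M where "M x \<longleftrightarrow> (\<forall>w\<in>N. orthogonal x w)" for x
  have l0: "(\<lambda>n. inverse (real (Suc n))) \<longlonglongrightarrow> 0"
    using LIMSEQ_Suc[OF lim_inverse_n] by simp
  have l0r: "(\<lambda>n. inverse (real (Suc (r n)))) \<longlonglongrightarrow> 0" if "strict_mono r" for r :: "nat \<Rightarrow> nat"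
    using LIMSEQ_subseq_LIMSEQ[OF l0 that] by (simp add: o_def)
  have mu: "\<exists>\<mu>>0. \<forall>x. M x \<longrightarrow> \<mu> * (norm x)^2 \<le> Gq x"
  proof (rule ccontr)
    assume nmu: "\<not> (\<exists>\<mu>>0. \<forall>x. M x \<longrightarrow> \<mu> * (norm x)^2 \<le> Gq x)"
    have "\<exists>v. norm v = 1 \<and> M v \<and> Gq v < inverse (real (Suc n))" for n
    proof -
      have "inverse (real (Suc n)) > 0" by simp
      then obtain x where x: "M x" "Gq x < inverse (real (Suc n)) * (norm x)^2"
        using nmu by (meson not_le)
      have xn: "x \<noteq> 0" using x(2) Gq0[of x] by auto
      define v where "v = inverse (norm x) *\<^sub>R x"
      have "norm v = 1" using xn by (simp add: v_def)
      moreover have "M v" using x(1) by (simp add: M_def orthogonal_def v_def)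
      moreover have "Gq v < inverse (real (Suc n))"
      proof -
        have "Gq v = (inverse (norm x))^2 * Gq x" by (simp add: v_def Gqscale)
        also have "\<dots> < (inverse (norm x))^2 * (inverse (real (Suc n)) * (norm x)^2)"
          using x(2) xn by (intro mult_strict_left_mono) auto
        also have "\<dots> = inverse (real (Suc n))" using xn by (simp add: field_simps)
        finally show ?thesis .
      qed
      ultimately show ?thesis by blast
    qed
    then obtain vs where vs: "\<And>n. norm (vs n) = 1" "\<And>n. M (vs n)" "\<And>n. Gq (vs n) < inverse (real (Suc n))"
      by metis
    have "seq_compact (sphere (0::real^'d) 1)" by (rule compact_imp_seq_compact[OF compact_sphere])
    moreover have "\<forall>n. vs n \<in> sphere 0 1" using vs(1) by simp
    ultimately obtain v r where v: "v \<in> sphere 0 1" and r: "strict_mono r" and lim: "(vs \<circ> r) \<longlonglongrightarrow> v"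
      unfolding seq_compact_def by blast
    have Mv: "M v"
      unfolding M_def orthogonal_def
    proof
      fix w assume w: "w \<in> N"
      have "(\<lambda>n. (vs \<circ> r) n \<bullet> w) \<longlonglongrightarrow> v \<bullet> w" by (intro tendsto_intros lim)
      moreover have "(\<lambda>n. (vs \<circ> r) n \<bullet> w) = (\<lambda>n. 0)" using vs(2) w by (simp add: M_def orthogonal_def)
      ultimately show "v \<bullet> w = 0" using LIMSEQ_unique tendsto_const by metis
    qed
    have l1: "(\<lambda>n. norm (vs (r n) - v)) \<longlonglongrightarrow> 0"
      using tendsto_norm_zero[OF LIM_zero[OF lim]] by (simp add: o_def)
    have "(\<lambda>n. 2 * inverse (real (Suc (r n))) + 2 * (T * (Bh^2 * (norm (vs (r n) - v))^2)))
        \<longlonglongrightarrow> 2 * 0 + 2 * (T * (Bh^2 * 0^2))"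
      by (intro tendsto_intros l0r[OF r] l1)
    then have lim2: "(\<lambda>n. 2 * inverse (real (Suc (r n))) + 2 * (T * (Bh^2 * (norm (vs (r n) - v))^2))) \<longlonglongrightarrow> 0"
      by simp
    have "Gq v \<le> 0"
    proof (rule LIMSEQ_le_const[OF lim2], intro exI allI impI)
      fix n
      have "Gq v = Gq (vs (r n) + (v - vs (r n)))" by simp
      also have "\<dots> \<le> 2 * Gq (vs (r n)) + 2 * Gq (v - vs (r n))" by (rule Gqadd)
      also have "\<dots> \<le> 2 * inverse (real (Suc (r n))) + 2 * (T * (Bh^2 * (norm (vs (r n) - v))^2))"
        using vs(3)[of "r n"] Gqb[of "v - vs (r n)"] by (simp add: norm_minus_commute)
      finally show "Gq v \<le> 2 * inverse (real (Suc (r n))) + 2 * (T * (Bh^2 * (norm (vs (r n) - v))^2))" .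
    qed
    then have "Gq v = 0" using Gq0[of v] by simp
    then have "v \<in> N" by (rule GqN)
    then have "v \<bullet> v = 0" using Mv by (simp add: M_def orthogonal_def)
    then show False using v by simp
  qed
  then obtain \<mu> where \<mu>: "\<mu> > 0" "\<And>x. M x \<Longrightarrow> \<mu> * (norm x)^2 \<le> Gq x" by blast
  define w0 where "w0 t = Y t - C *v X 0 t" for t
  have w0c: "continuous_on {0..T} w0" unfolding w0_def
    by (intro continuous_intros Yc continuous_on_mv continuous_on_const Xc)
  have qeq: "Y t - C *v X x t = w0 t - H x t" for x t
    by (simp add: w0_def H_def Z_def matrix_vector_mult_diff_distrib)
  define q where "q x = integral {0..T} (\<lambda>t. (norm (Y t - C *v X x t))^2)" for x
  have qi: "(\<lambda>t. (norm (w0 t - H x t))^2) integrable_on {0..T}" for x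
    by (intro integrable_continuous_interval continuous_intros w0c Hc)
  have qalt: "q x = integral {0..T} (\<lambda>t. (norm (w0 t - H x t))^2)" for x
    by (simp add: q_def qeq)
  have q0: "q x \<ge> 0" for x unfolding qalt by (rule integral_nonneg[OF qi]) simp
  have "\<exists>x. q x < inverse (real (Suc n))" for n
    using apx[of "inverse (real (Suc n))"] by (simp add: q_def X_def)
  then obtain xs where xs: "\<And>n. q (xs n) < inverse (real (Suc n))" by metis
  have "\<exists>z. M z \<and> q z = q (xs n)" for n
  proof -
    obtain y z where yz: "y \<in> span N" "\<And>w. w \<in> span N \<Longrightarrow> orthogonal z w" "xs n = y + z"
      by (rule orthogonal_subspace_decomp_exists[of N "xs n"]) blast
    have spN: "span N = N" using subN by (simp add: span_eq_iff)
    have Mz: "M z" using yz(2) spN by (simp add: M_def)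
    have "q (xs n) = q z"
      unfolding qalt
    proof (rule integral_cong)
      fix t assume t: "t \<in> {0..T}"
      have "y \<in> N" using yz(1) spN by simp
      then have "H y t = 0" using t unfolding N_def by blast
      then show "(norm (w0 t - H (xs n) t))^2 = (norm (w0 t - H z t))^2"
        using Hadd[OF t, of y z] yz(3) by simp
    qed
    then show ?thesis using Mz by metis
  qed
  then obtain zs where zs: "\<And>n. M (zs n)" "\<And>n. q (zs n) = q (xs n)" by metis
  define W where "W = integral {0..T} (\<lambda>t. (norm (w0 t))^2)"
  have Wi: "(\<lambda>t. (norm (w0 t))^2) integrable_on {0..T}"
    by (intro integrable_continuous_interval continuous_intros w0c)
  have GqW: "Gq z \<le> 2 * W + 2 * q z" for z
  proof -
    have "Gq z \<le> integral {0..T} (\<lambda>t. 2 * (norm (w0 t))^2 + 2 * (norm (w0 t - H z t))^2)"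
      unfolding Gq_def
    proof (rule integral_le[OF Gqi])
      show "(\<lambda>t. 2 * (norm (w0 t))^2 + 2 * (norm (w0 t - H z t))^2) integrable_on {0..T}"
        by (intro integrable_add integrable_on_mult_right Wi qi)
      fix t
      have "H z t = w0 t + (H z t - w0 t)" by simp
      then have "(norm (H z t))^2 \<le> 2 * (norm (w0 t))^2 + 2 * (norm (H z t - w0 t))^2"
        by (metis sq_norm_add)
      then show "(norm (H z t))^2 \<le> 2 * (norm (w0 t))^2 + 2 * (norm (w0 t - H z t))^2"
        by (simp add: norm_minus_commute)
    qed
    also have "\<dots> = 2 * W + 2 * q z"
      unfolding W_def qalt
      by (subst integral_add) (auto intro!: integrable_on_mult_right Wi qi simp: integral_mult_right)
    finally show ?thesis .
  qed
  define R where "R = sqrt ((2 * W + 2) / \<mu>)"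
  have zsb: "zs n \<in> cball 0 R" for n
  proof -
    have "\<mu> * (norm (zs n))^2 \<le> 2 * W + 2 * q (zs n)" using \<mu>(2)[OF zs(1)[of n]] GqW[of "zs n"] by linarith
    also have "\<dots> \<le> 2 * W + 2"
    proof -
      have "inverse (real (Suc n)) \<le> 1" by (simp add: inverse_le_1_iff)
      then show ?thesis using zs(2)[of n] xs[of n] by linarith
    qed
    finally have "(norm (zs n))^2 \<le> (2 * W + 2) / \<mu>" using \<mu>(1) by (simp add: field_simps)
    then have "norm (zs n) \<le> R" unfolding R_def by (rule real_le_rsqrt)
    then show ?thesis by simp
  qed
  have "seq_compact (cball (0::real^'d) R)" by (rule compact_imp_seq_compact[OF compact_cball])
  then obtain a r where r: "strict_mono r" and lim: "(zs \<circ> r) \<longlonglongrightarrow> a"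
    using zsb unfolding seq_compact_def by blast
  have l1: "(\<lambda>n. norm (zs (r n) - a)) \<longlonglongrightarrow> 0"
    using tendsto_norm_zero[OF LIM_zero[OF lim]] by (simp add: o_def)
  have "(\<lambda>n. 2 * inverse (real (Suc (r n))) + 2 * (T * (Bh^2 * (norm (zs (r n) - a))^2)))
      \<longlonglongrightarrow> 2 * 0 + 2 * (T * (Bh^2 * 0^2))"
    by (intro tendsto_intros l0r[OF r] l1)
  then have lim2: "(\<lambda>n. 2 * inverse (real (Suc (r n))) + 2 * (T * (Bh^2 * (norm (zs (r n) - a))^2))) \<longlonglongrightarrow> 0"
    by simp
  have qz: "q a \<le> 2 * q z + 2 * Gq (z - a)" for z
  proof -
    have "q a \<le> integral {0..T} (\<lambda>t. 2 * (norm (w0 t - H z t))^2 + 2 * (norm (H (z - a) t))^2)"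
      unfolding qalt
    proof (rule integral_le[OF qi])
      show "(\<lambda>t. 2 * (norm (w0 t - H z t))^2 + 2 * (norm (H (z - a) t))^2) integrable_on {0..T}"
        by (intro integrable_add integrable_on_mult_right Gqi qi)
      fix t assume t: "t \<in> {0..T}"
      have "w0 t - H a t = (w0 t - H z t) + H (z - a) t" using Hdiff[OF t, of z a] by simp
      then show "(norm (w0 t - H a t))^2 \<le> 2 * (norm (w0 t - H z t))^2 + 2 * (norm (H (z - a) t))^2"
        by (metis sq_norm_add)
    qed
    also have "\<dots> = 2 * q z + 2 * Gq (z - a)"
      unfolding Gq_def qalt
      by (subst integral_add) (auto intro!: integrable_on_mult_right Gqi qi simp: integral_mult_right)
    finally show ?thesis .
  qed
  have "q a \<le> 0"
  proof (rule LIMSEQ_le_const[OF lim2], intro exI allI impI)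
    fix n
    have "q a \<le> 2 * q (zs (r n)) + 2 * Gq (zs (r n) - a)" by (rule qz)
    also have "\<dots> \<le> 2 * inverse (real (Suc (r n))) + 2 * (T * (Bh^2 * (norm (zs (r n) - a))^2))"
      using xs[of "r n"] zs(2)[of "r n"] Gqb[of "zs (r n) - a"] by simp
    finally show "q a \<le> 2 * inverse (real (Suc (r n))) + 2 * (T * (Bh^2 * (norm (zs (r n) - a))^2))" .
  qed
  then have qa: "q a = 0" using q0[of a] by simp
  have "Y t = C *v traj T At rt a (\<lambda>_. 0) t" if t: "t \<in> {0..T}" for t
  proof -
    have "(norm (Y t - C *v X a t))^2 = 0"
      by (rule cont_zero[OF T _ _ _ t, where g="\<lambda>t. (norm (Y t - C *v X a t))^2"])
         (use qa in \<open>auto intro!: continuous_intros Yc continuous_on_mv continuous_on_const Xc simp: q_def\<close>)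
    then show ?thesis by (simp add: X_def)
  qed
  then show ?thesis by blast
qed

theorem mainTheorem5:
  fixes T :: real
    and C :: "real^'d^'o"
    and Q :: "real^'d^'d"
    and \<Theta> :: "(real^'p) set"
    and A :: "real^'p \<Rightarrow> real \<Rightarrow> real^'d^'d"
    and r :: "real^'p \<Rightarrow> real \<Rightarrow> real^'d"
    and \<theta>s :: "real^'p"
    and x0s :: "real^'d"
    and lam :: real
    and \<theta> :: "real^'p"
  assumes T_pos: "T > 0"
    and A_cont: "\<And>\<theta>. \<theta> \<in> \<Theta> \<Longrightarrow> continuous_on {0..T} (A \<theta>)"
    and r_cont: "\<And>\<theta>. \<theta> \<in> \<Theta> \<Longrightarrow> continuous_on {0..T} (r \<theta>)"
    and C1: "compact \<Theta>" "\<theta>s \<in> interior \<Theta>"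
    and C2a: "Q = 0" "\<And>\<theta>. \<theta> \<in> \<Theta> \<Longrightarrow> invertible (obs_gram T C (A \<theta>))"
    and C2b: "\<And>\<theta>' x0. \<theta>' \<in> \<Theta> \<Longrightarrow>
        (\<forall>t\<in>{0..T}. C *v traj T (A \<theta>') (r \<theta>') x0 (\<lambda>_. 0) t
                   = C *v traj T (A \<theta>s) (r \<theta>s) x0s (\<lambda>_. 0) t)
        \<Longrightarrow> (\<theta>', x0) = (\<theta>s, x0s)"
    and lam_pos: "lam > 0"
    and theta_in: "\<theta> \<in> \<Theta>"
  shows "S_cost T C Q A r (\<lambda>t. C *v traj T (A \<theta>s) (r \<theta>s) x0s (\<lambda>_. 0) t) \<theta> lam = 0
         \<longleftrightarrow> \<theta> = \<theta>s"
proof -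
  have T0: "T \<ge> 0" using T_pos by simp
  have ths: "\<theta>s \<in> \<Theta>" using C1(2) interior_subset by blast
  have Qz: "x0 \<bullet> (Q *v x0) = 0" for x0
  proof -
    have "Q *v x0 = 0" unfolding C2a(1) by (simp add: vec_eq_iff matrix_vector_mult_def)
    then show ?thesis by simp
  qed
  define Y where "Y = (\<lambda>t. C *v traj T (A \<theta>s) (r \<theta>s) x0s (\<lambda>_. 0) t)"
  have Yc: "continuous_on {0..T} Y"
    unfolding Y_def
    by (intro continuous_on_mv continuous_on_const)
       (use traj_char[OF T0 A_cont[OF ths] r_cont[OF ths] integrable_0] in blast)
  define V where "V = {integral {0..T} (\<lambda>t. (norm (Y t - C *v traj T (A \<theta>) (r \<theta>) x0 u t))^2 + lam * (norm (u t))^2)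
                   | x0 u. L2_on T u}"
  have Seq: "S_cost T C Q A r Y \<theta> lam = Inf V"
    unfolding S_cost_def V_def using Qz by simp
  have L20: "L2_on T (\<lambda>_. 0::real^'d)" unfolding L2_on_def using integrable_0 by simp
  show ?thesis
    unfolding Y_def[symmetric] Seq
  proof
    assume inf0: "Inf V = 0"
    have "\<exists>a. \<forall>t\<in>{0..T}. Y t = C *v traj T (A \<theta>) (r \<theta>) a (\<lambda>_. 0) t"
    proof (rule finite_dim[OF T_pos A_cont[OF theta_in] r_cont[OF theta_in] Yc])
      fix \<epsilon> :: real assume "\<epsilon> > 0"
      then show "\<exists>x0. integral {0..T} (\<lambda>t. (norm (Y t - C *v traj T (A \<theta>) (r \<theta>) x0 (\<lambda>_. 0) t))^2) < \<epsilon>"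
        by (intro approx[OF T_pos A_cont[OF theta_in] r_cont[OF theta_in] Yc lam_pos]) (use inf0 in \<open>simp_all add: V_def\<close>)
    qed
    then obtain a where a0: "\<forall>t\<in>{0..T}. Y t = C *v traj T (A \<theta>) (r \<theta>) a (\<lambda>_. 0) t" by blast
    have a: "\<forall>t\<in>{0..T}. C *v traj T (A \<theta>) (r \<theta>) a (\<lambda>_. 0) t = C *v traj T (A \<theta>s) (r \<theta>s) x0s (\<lambda>_. 0) t"
      using a0 by (simp add: Y_def)
    show "\<theta> = \<theta>s" using C2b[OF theta_in a] by simp
  next
    assume eq: "\<theta> = \<theta>s"
    show "Inf V = 0"
    proof (rule cInf_eq_minimum)
      have "integral {0..T} (\<lambda>t. (norm (Y t - C *v traj T (A \<theta>) (r \<theta>) x0s (\<lambda>_. 0) t))^2 + lam * (norm ((\<lambda>_. 0::real^'d) t))^2) = 0"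
        using eq by (simp add: Y_def)
      then show "0 \<in> V" unfolding V_def using L20 by (intro CollectI exI[of _ x0s] exI[of _ "\<lambda>_. 0"]) simp
      fix v assume "v \<in> V"
      then obtain x0 u where v: "v = integral {0..T} (\<lambda>t. (norm (Y t - C *v traj T (A \<theta>) (r \<theta>) x0 u t))^2 + lam * (norm (u t))^2)"
        unfolding V_def by blast
      show "0 \<le> v"
      proof (cases "(\<lambda>t. (norm (Y t - C *v traj T (A \<theta>) (r \<theta>) x0 u t))^2 + lam * (norm (u t))^2) integrable_on {0..T}")
        case True
        then show ?thesis unfolding v by (rule integral_nonneg) (use lam_pos in simp)
      next
        case False
        then show ?thesis unfolding v by (simp add: not_integrable_integral)
      qed
    qed
  qed
qed

end
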